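(* $S^{(1)}(\beta)=0$ if and only if \[ \begin{cases} K(\chi)-K(\rho\chi)\equiv 0\pmod{4\mathcal{P}} & \text{if } q\equiv 1\pmod 4,\\ 2+K(\chi)+K(\rho\chi)\equiv 0\pmod{4\mathcal{P}} & \text{if } q\equiv 3\pmod 4, \end{cases} \] where the congruences are modulo the ideal $4\mathcal{P}$ of $\mathbb{Z}[\zeta_k]$.
   Context: Let $p$ be an odd prime, $m\ge1$, $q=p^m$, $\alpha$ a primitive element of $\mathbb{F}_q$, and $T=q-1$. The binary SLCE sequence $(s_n)_{n\ge0}$ is defined as follows: $s_n=1$ if $\alpha^n+1$ is a nonzero non-square of $\mathbb{F}_q$, and $s_n=0$ otherwise. Put $S(X)=\sum_{n=0}^{T-1}s_nX^n\in\mathbb{F}_2[X]$. For an integer $t\ge0$, the $t$-th Hasse derivative is $S^{(t)}(X)=\sum_{n=t}^{T-1}\binom{n}{t}s_nX^{n-t}$, with coefficients reduced mod $2$. Let $\beta$ be an element of an algebraic closure of $\mathbb{F}_2$ with $\beta^T=1$ and multiplicative order $k>1$ (so $k$ is odd). Let $f$ be the order of $2$ modulo $k$, and write $\zeta_N=e^{2\pi i/N}$. Let $\mathcal{P}$ be a prime ideal of $\mathbb{Z}[\zeta_k]$ containing $2$. Fix a field isomorphism $\phi:\mathbb{F}_2(\beta)=\mathbb{F}_{2^f}\to\mathbb{Z}[\zeta_k]/\mathcal{P}$, and let $\zeta$ be the unique complex $k$-th root of unity with $\phi(\beta)=\zeta+\mathcal{P}$. Multiplicative characters of $\mathbb{F}_q$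 are homomorphisms $\mathbb{F}_q^*\to\mathbb{C}^*$, extended by value $0$ at $0$. Let $\rho$ be the quadratic character. Let $\chi$ be the character with $\chi(\alpha^n)=\zeta^n$. For a character $\psi$, set $K(\psi)=\sum_{x\in\mathbb{F}_q}\rho(x)\psi(1-x)$. *)

theory Defs
  imports Complex_Main "HOL-Computational_Algebra.Polynomial"
begin

definition primitive_elem :: "'a::{field,finite} \<Rightarrow> bool" where
  "primitive_elem a \<longleftrightarrow> a \<noteq> 0 \<and> (\<forall>x. x \<noteq> 0 \<longrightarrow> (\<exists>n::nat. a ^ n = x))"

definition is_square :: "'a::field \<Rightarrow> bool" where
  "is_square x \<longleftrightarrow> (\<exists>y. y ^ 2 = x)"

definition slce :: "'a::{field,finite} \<Rightarrow> nat \<Rightarrow> bool" where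
  "slce a n \<longleftrightarrow> a ^ n + 1 \<noteq> 0 \<and> \<not> is_square (a ^ n + 1)"

text \<open>t-th Hasse derivative of S(X) = sum_{n<T} s_n X^n, evaluated at b (in a field of
  characteristic 2, so the binomial coefficients are reduced mod 2 automatically).\<close>
definition hasse_S :: "'a::{field,finite} \<Rightarrow> nat \<Rightarrow> 'b::field \<Rightarrow> 'b" where
  "hasse_S a t b = (\<Sum>n\<in>{t ..< card (UNIV :: 'a set) - 1}.
      of_nat (n choose t) * (if slce a n then 1 else 0) * b ^ (n - t))"

definition rho :: "'a::{field,finite} \<Rightarrow> complex" where
  "rho x = (if x = 0 then 0 else if is_square x then 1 else -1)"

definition chi :: "'a::{field,finite} \<Rightarrow> complex \<Rightarrow> 'a \<Rightarrow> complex" where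
  "chi a z x = (if x = 0 then 0 else z ^ (LEAST n. a ^ n = x))"

definition Ksum :: "('a::{field,finite} \<Rightarrow> complex) \<Rightarrow> complex" where
  "Ksum psi = (\<Sum>x\<in>UNIV. rho x * psi (1 - x))"

definition is_subfield :: "'b::field set \<Rightarrow> bool" where
  "is_subfield F \<longleftrightarrow> 0 \<in> F \<and> 1 \<in> F \<and> (\<forall>x\<in>F. \<forall>y\<in>F. x + y \<in> F \<and> x * y \<in> F)
     \<and> (\<forall>x\<in>F. - x \<in> F) \<and> (\<forall>x\<in>F. x \<noteq> 0 \<longrightarrow> inverse x \<in> F)"

definition gen_field :: "'b::field \<Rightarrow> 'b set" where
  "gen_field b = \<Inter>{F. is_subfield F \<and> b \<in> F}"

definition zeta :: "nat \<Rightarrow> complex" where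
  "zeta N = cis (2 * pi / real N)"

definition Zzeta :: "nat \<Rightarrow> complex set" where
  "Zzeta k = {poly (map_poly of_int p) (zeta k) | p :: int poly. True}"

definition is_ideal_in :: "complex set \<Rightarrow> complex set \<Rightarrow> bool" where
  "is_ideal_in R I \<longleftrightarrow> I \<subseteq> R \<and> 0 \<in> I \<and> (\<forall>x\<in>I. \<forall>y\<in>I. x + y \<in> I) \<and> (\<forall>x\<in>I. - x \<in> I)
     \<and> (\<forall>r\<in>R. \<forall>x\<in>I. r * x \<in> I)"

definition is_prime_ideal_in :: "complex set \<Rightarrow> complex set \<Rightarrow> bool" where
  "is_prime_ideal_in R I \<longleftrightarrow> is_ideal_in R I \<and> I \<noteq> R
     \<and> (\<forall>x\<in>R. \<forall>y\<in>R. x * y \<in> I \<longrightarrow> x \<in> I \<or> y \<in> I)"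

definition coset :: "complex \<Rightarrow> complex set \<Rightarrow> complex set" where
  "coset x I = (\<lambda>i. x + i) ` I"

definition quotient_set :: "complex set \<Rightarrow> complex set \<Rightarrow> complex set set" where
  "quotient_set R I = (\<lambda>x. coset x I) ` R"

definition is_field_iso :: "('b::field \<Rightarrow> complex set) \<Rightarrow> 'b set \<Rightarrow> complex set \<Rightarrow> complex set \<Rightarrow> bool" where
  "is_field_iso phi F R I \<longleftrightarrow> bij_betw phi F (quotient_set R I) \<and> phi 1 = coset 1 I
     \<and> (\<forall>a\<in>F. \<forall>b\<in>F. \<forall>x\<in>R. \<forall>y\<in>R. phi a = coset x I \<and> phi b = coset y I \<longrightarrow>
          phi (a + b) = coset (x + y) I \<and> phi (a * b) = coset (x * y) I)"

definition cong_4P :: "complex \<Rightarrow> complex \<Rightarrow> complex set \<Rightarrow> bool" where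
  "cong_4P x y P \<longleftrightarrow> x - y \<in> (\<lambda>p. 4 * p) ` P"

end

theory Submission
  imports Defs
begin



lemma ipoly_add: "map_poly (of_int::int\<Rightarrow>complex) (p + q) = map_poly of_int p + map_poly of_int q"
  by (intro poly_eqI) (simp add: coeff_map_poly)

lemma ipoly_mult: "poly (map_poly (of_int::int\<Rightarrow>complex) (p * q)) z
   = poly (map_poly of_int p) z * poly (map_poly of_int q) z"
proof (induction p)
  case 0 then show ?case by simp
next
  case (pCons a p)
  have "map_poly (of_int::int\<Rightarrow>complex) (smult a q) = smult (of_int a) (map_poly of_int q)"
    by (rule map_poly_smult) auto
  moreover have "map_poly (of_int::int\<Rightarrow>complex) (pCons 0 (p*q)) = pCons 0 (map_poly of_int (p*q))"
    by (simp add: map_poly_pCons)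
  moreover have "map_poly (of_int::int\<Rightarrow>complex) (pCons a p) = pCons (of_int a) (map_poly of_int p)"
    by (rule map_poly_pCons) auto
  ultimately show ?case using pCons.IH by (simp add: ipoly_add algebra_simps)
qed

lemma Zzeta_add: "x \<in> Zzeta k \<Longrightarrow> y \<in> Zzeta k \<Longrightarrow> x + y \<in> Zzeta k"
  unfolding Zzeta_def
proof clarify
  fix p q :: "int poly"
  show "\<exists>r. poly (map_poly complex_of_int p) (zeta k) + poly (map_poly complex_of_int q) (zeta k)
     = poly (map_poly complex_of_int r) (zeta k) \<and> True"
    by (rule exI[of _ "p+q"]) (simp add: ipoly_add)
qed

lemma Zzeta_mult: "x \<in> Zzeta k \<Longrightarrow> y \<in> Zzeta k \<Longrightarrow> x * y \<in> Zzeta k"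
  unfolding Zzeta_def
proof clarify
  fix p q :: "int poly"
  show "\<exists>r. poly (map_poly complex_of_int p) (zeta k) * poly (map_poly complex_of_int q) (zeta k)
     = poly (map_poly complex_of_int r) (zeta k) \<and> True"
    by (rule exI[of _ "p*q"]) (simp add: ipoly_mult)
qed

lemma Zzeta_1: "1 \<in> Zzeta k"
  unfolding Zzeta_def by (auto intro!: exI[of _ 1])

lemma Zzeta_0: "0 \<in> Zzeta k"
  unfolding Zzeta_def by (auto intro!: exI[of _ 0])




lemma prim_order:
  fixes a :: "'a::{field,finite}"
  assumes prim: "primitive_elem a"
  defines "T \<equiv> card (UNIV::'a set) - 1"
  shows "a ^ T = 1 \<and> inj_on (\<lambda>n. a^n) {..<T} \<and> (\<lambda>n. a^n) ` {..<T} = UNIV - {0}"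
proof -
  have a0: "a \<noteq> 0" and gen: "\<And>x. x \<noteq> 0 \<Longrightarrow> \<exists>n. a^n = x"
    using prim unfolding primitive_elem_def by auto
  have cT: "card (UNIV - {0::'a}) = T" unfolding T_def by (simp add: card_Diff_singleton)
  have sub: "(\<lambda>n. a^n) ` A \<subseteq> UNIV - {0}" for A using a0 by auto
  have "\<not> inj_on (\<lambda>n. a^n) {..T}"
  proof
    assume "inj_on (\<lambda>n. a^n) {..T}"
    then have "card ((\<lambda>n. a^n) ` {..T}) = T + 1" by (simp add: card_image)
    moreover have "card ((\<lambda>n. a^n) ` {..T}) \<le> T" using card_mono[OF _ sub] cT by fastforce
    ultimately show False by simp
  qed
  then obtain i j where ij: "i \<le> T" "j \<le> T" "i \<noteq> j" "a^i = a^j" unfolding inj_on_def by auto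
  have ex: "\<exists>d. 0 < d \<and> d \<le> T \<and> a^d = 1"
  proof -
    have "\<exists>i j. i < j \<and> j \<le> T \<and> a^i = a^j"
      using ij by (metis linorder_neqE_nat)
    then obtain i j where "i < j" "j \<le> T" "a^i = a^j" by blast
    moreover have "a^j = a^i * a^(j-i)" using \<open>i<j\<close> by (simp flip: power_add)
    ultimately have "a^i * a^(j-i) = a^i * 1" by simp
    then have "a^(j-i) = 1" using a0 by simp
    then show ?thesis using \<open>i<j\<close> \<open>j \<le> T\<close> by (intro exI[of _ "j-i"]) auto
  qed
  define d where "d = (LEAST d. 0 < d \<and> a^d = 1)"
  obtain d0 where d0: "0 < d0" "d0 \<le> T" "a^d0 = 1" using ex by blast
  have dd: "0 < d \<and> a^d = 1" unfolding d_def by (rule LeastI[of _ d0]) (use d0 in simp)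
  have d: "0 < d" "a^d = 1" using dd by auto
  have "d \<le> d0" unfolding d_def by (rule Least_le) (use d0 in simp)
  then have dle: "d \<le> T" using d0 by simp
  have dmin: "\<And>e. 0 < e \<Longrightarrow> e < d \<Longrightarrow> a^e \<noteq> 1" unfolding d_def using not_less_Least by blast
  have modd: "a^n = a^(n mod d)" for n
  proof -
    have "a^n = a^(d * (n div d) + n mod d)" by (simp only: mult_div_mod_eq)
    also have "\<dots> = a^(n mod d)" by (simp only: power_add power_mult d power_one mult_1_left)
    finally show ?thesis .
  qed
  have "UNIV - {0} \<subseteq> (\<lambda>n. a^n) ` {..<d}"
  proof
    fix x assume "x \<in> UNIV - {0::'a}"
    then obtain n where "a^n = x" using gen by auto
    then show "x \<in> (\<lambda>n. a^n) ` {..<d}" using modd[of n] d(1) by auto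
  qed
  then have "card (UNIV - {0::'a}) \<le> card ((\<lambda>n. a^n) ` {..<d})" by (intro card_mono) auto
  then have "T \<le> card ((\<lambda>n. a^n) ` {..<d})" using cT by simp
  also have "\<dots> \<le> d" using card_image_le[of "{..<d}"] by simp
  finally have dT: "d = T" using dle by simp
  have inj: "inj_on (\<lambda>n. a^n) {..<T}"
  proof (rule inj_onI, rule ccontr)
    fix i j assume "i \<in> {..<T}" "j \<in> {..<T}" "a^i = a^j" "i \<noteq> j"
    then have "\<exists>i j. i < j \<and> j < T \<and> a^i = a^j" by (metis lessThan_iff linorder_neqE_nat)
    then obtain i j where "i < j" "j < T" "a^i = a^j" by blast
    moreover have "a^j = a^i * a^(j-i)" using \<open>i<j\<close> by (simp flip: power_add)
    ultimately have "a^i * a^(j-i) = a^i * 1" by simp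
    then have "a^(j-i) = 1" using a0 by simp
    then show False using dmin[of "j-i"] \<open>i<j\<close> \<open>j<T\<close> dT by auto
  qed
  have "(\<lambda>n. a^n) ` {..<T} = UNIV - {0}" using sub \<open>UNIV - {0} \<subseteq> _\<close> dT by auto
  then show ?thesis using inj d dT by simp
qed




context
  fixes a :: "'a::{field,finite}"
  and TT hh :: nat
  assumes prim: "primitive_elem a" and oddq: "odd (card (UNIV::'a set))"
    and TT_def: "TT = card (UNIV::'a set) - 1" and hh_def: "hh = TT div 2"
begin


lemma a_nz: "a \<noteq> 0" using prim unfolding primitive_elem_def by auto

lemma card_ge2: "card (UNIV::'a set) \<ge> 2"
proof -
  have "card {0::'a, 1} \<le> card (UNIV::'a set)" by (rule card_mono) auto
  then show ?thesis by simp
qed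

lemma TT_even: "TT = 2 * hh" "hh > 0"
  using oddq card_ge2 unfolding TT_def hh_def by (auto elim!: oddE)

lemma aT: "a ^ TT = 1" using prim_order[OF prim] TT_def by simp
lemma a_inj: "inj_on (\<lambda>n. a^n) {..<TT}" using prim_order[OF prim] TT_def by simp
lemma a_img: "(\<lambda>n. a^n) ` {..<TT} = UNIV - {0}" using prim_order[OF prim] TT_def by simp

lemma powmod: "a^n = a^(n mod TT)"
proof -
  have "a^n = a^(TT * (n div TT) + n mod TT)" by (simp only: mult_div_mod_eq)
  also have "\<dots> = a^(n mod TT)" by (simp only: power_add power_mult aT power_one mult_1_left)
  finally show ?thesis .
qed

lemma pow_eq_iff: "i < TT \<Longrightarrow> j < TT \<Longrightarrow> a^i = a^j \<longleftrightarrow> i = j"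
  using a_inj unfolding inj_on_def by auto

lemma pow_eq_iff': "a^i = a^j \<longleftrightarrow> i mod TT = j mod TT"
proof -
  have "TT > 0" using TT_even by simp
  then show ?thesis using pow_eq_iff[of "i mod TT" "j mod TT"] powmod[of i] powmod[of j] by simp
qed

lemma ah: "a ^ hh = -1"
proof -
  have "(a^hh)^2 = 1" using aT TT_even by (metis power_mult mult.commute)
  then have "(a^hh - 1) * (a^hh + 1) = 0" by (simp add: algebra_simps power2_eq_square)
  moreover have "a^hh \<noteq> 1"
  proof
    assume "a^hh = 1"
    then have "a^hh = a^0" by simp
    then show False using pow_eq_iff[of hh 0] TT_even by simp
  qed
  ultimately show ?thesis by (simp add: eq_neg_iff_add_eq_0)
qed

lemma chi_pow: "n < TT \<Longrightarrow> chi a z (a^n) = z^n"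
proof -
  assume n: "n < TT"
  have "(LEAST m. a^m = a^n) = n"
  proof (rule Least_equality)
    fix m assume "a^m = a^n"
    then have "m mod TT = n" using pow_eq_iff' n by simp
    then show "n \<le> m" by (metis mod_less_eq_dividend)
  qed simp
  then show ?thesis unfolding chi_def using a_nz by simp
qed

lemma square_pow: "is_square (a^n) \<longleftrightarrow> even n"
proof
  assume "is_square (a^n)"
  then obtain y where y: "y^2 = a^n" unfolding is_square_def by auto
  have "y \<noteq> 0" using y a_nz by auto
  then obtain j where "a^j = y" using prim unfolding primitive_elem_def by auto
  then have "a^(2*j) = a^n" using y by (simp add: power_mult mult.commute)
  then have "(2*j) mod TT = n mod TT" using pow_eq_iff' by blast
  then have "(2*j) mod TT mod 2 = n mod TT mod 2" by simp
  moreover have "even TT" using TT_even by simp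
  ultimately show "even n" by (simp add: mod_mod_cancel even_iff_mod_2_eq_zero)
next
  assume "even n"
  then obtain j where "n = 2*j" by auto
  then show "is_square (a^n)" unfolding is_square_def
    by (intro exI[of _ "a^j"]) (simp add: power_mult mult.commute)
qed

lemma rho_pow: "rho (a^n) = (-1)^n"
  using square_pow[of n] a_nz unfolding rho_def by auto

lemma sum_UNIV_pow: "(\<Sum>x\<in>UNIV. f x) = f 0 + (\<Sum>n<TT. f (a^n))"
proof -
  have "(\<Sum>x\<in>UNIV. f x) = f 0 + sum f (UNIV - {0})" by (rule sum.remove) auto
  then have "(\<Sum>x\<in>UNIV. f x) = f 0 + sum f ((\<lambda>n. a^n) ` {..<TT})"
    using a_img by simp
  also have "sum f ((\<lambda>n. a^n) ` {..<TT}) = (\<Sum>n<TT. f (a^n))"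
    using sum.reindex[OF a_inj] by simp
  finally show ?thesis .
qed

lemma pow_minus1: "n < TT \<Longrightarrow> a^n + 1 = 0 \<longleftrightarrow> n = hh"
proof -
  assume n: "n < TT"
  have "a^n + 1 = 0 \<longleftrightarrow> a^n = -1" by (simp add: eq_neg_iff_add_eq_0)
  also have "\<dots> \<longleftrightarrow> a^n = a^hh" using ah by simp
  also have "\<dots> \<longleftrightarrow> n = hh" using pow_eq_iff[OF n] TT_even by simp
  finally show ?thesis .
qed

end



lemma pow_mod_gen: "(w::'c::monoid_mult)^T = 1 \<Longrightarrow> w^(j mod T) = w^j"
proof -
  assume w: "w^T = 1"
  have "w^j = w^(T * (j div T) + j mod T)" by (simp only: mult_div_mod_eq)
  also have "\<dots> = w^(j mod T)" by (simp only: power_add power_mult w power_one mult_1_left)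
  finally show ?thesis by simp
qed

lemma sum_shift:
  fixes T c :: nat
  assumes "T > 0"
  shows "(\<Sum>n<T. g n) = (\<Sum>n<T. g ((n + c) mod T))"
proof -
  have "bij_betw (\<lambda>n. (n + c) mod T) {..<T} {..<T}"
  proof (rule bij_betw_byWitness[where f' = "\<lambda>m. (m + (T - c mod T)) mod T"])
    show "\<forall>n\<in>{..<T}. ((n + c) mod T + (T - c mod T)) mod T = n"
    proof
      fix n assume n: "n \<in> {..<T}"
      have "((n + c) mod T + (T - c mod T)) mod T = (n + c + (T - c mod T)) mod T" by (simp add: mod_add_left_eq)
      also have "n + c + (T - c mod T) = n + T * (c div T) + T"
        using assms mod_less_divisor[of T c] mult_div_mod_eq[of T c] by linarith
      also have "\<dots> = n + T * (c div T + 1)" by (simp add: algebra_simps)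
      also have "(n + T * (c div T + 1)) mod T = n mod T" by (rule mod_mult_self2)
      also have "n mod T = n" using n by simp
      finally show "((n + c) mod T + (T - c mod T)) mod T = n" .
    qed
    show "\<forall>m\<in>{..<T}. ((m + (T - c mod T)) mod T + c) mod T = m"
    proof
      fix n assume n: "n \<in> {..<T}"
      have "((n + (T - c mod T)) mod T + c) mod T = (n + (T - c mod T) + c) mod T" by (simp add: mod_add_left_eq)
      also have "n + (T - c mod T) + c = n + T * (c div T) + T"
        using assms mod_less_divisor[of T c] mult_div_mod_eq[of T c] by linarith
      also have "\<dots> = n + T * (c div T + 1)" by (simp add: algebra_simps)
      also have "(n + T * (c div T + 1)) mod T = n mod T" by (rule mod_mult_self2)
      also have "n mod T = n" using n by simp
      finally show "((n + (T - c mod T)) mod T + c) mod T = n" .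
    qed
  qed (use assms in auto)
  then show ?thesis by (rule sum.reindex_bij_betw[symmetric])
qed




context
  fixes a :: "'a::{field,finite}" and TT hh :: nat and z :: complex
  assumes prim: "primitive_elem a" and oddq: "odd (card (UNIV::'a set))"
    and TT_def: "TT = card (UNIV::'a set) - 1" and hh_def: "hh = TT div 2"
    and zT: "z ^ TT = 1" and zh: "z ^ hh = 1" and z1: "z \<noteq> 1" and zm1: "z \<noteq> -1"
begin

lemmas L = TT_even[OF prim oddq TT_def hh_def] powmod[OF prim oddq TT_def hh_def]
  ah[OF prim oddq TT_def hh_def] chi_pow[OF prim oddq TT_def hh_def]
  rho_pow[OF prim oddq TT_def hh_def] sum_UNIV_pow[OF prim oddq TT_def hh_def]
  pow_minus1[OF prim oddq TT_def hh_def]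

lemma Ksum_pow:
  assumes "psi 0 = 0"
  shows "Ksum psi = (\<Sum>n<TT. rho (1 - a^n) * psi (a^n))"
proof -
  have "Ksum psi = (\<Sum>y\<in>UNIV. rho (1 - y) * psi y)"
    unfolding Ksum_def
    by (rule sum.reindex_bij_witness[where i = "\<lambda>x. 1 - x" and j = "\<lambda>x. 1 - x"]) auto
  also have "\<dots> = (\<Sum>n<TT. rho (1 - a^n) * psi (a^n))"
    using L(7)[of "\<lambda>y. rho (1 - y) * psi y"] assms by simp
  finally show ?thesis .
qed

lemma K1: "Ksum (chi a z) = (\<Sum>n<TT. rho (1 + a^n) * z^n)"
proof -
  have "Ksum (chi a z) = (\<Sum>n<TT. rho (1 - a^n) * z^n)"
    using Ksum_pow[of "chi a z"] L(5) by (simp add: chi_def)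
  also have "\<dots> = (\<Sum>n<TT. rho (1 - a^((n + hh) mod TT)) * z^((n + hh) mod TT))"
    by (rule sum_shift) (use L(1,2) in simp)
  also have "\<dots> = (\<Sum>n<TT. rho (1 + a^n) * z^n)"
  proof (rule sum.cong[OF refl])
    fix n
    have "a^((n + hh) mod TT) = -(a^n)" using L(3)[of "n+hh"] L(4) by (simp add: power_add)
    moreover have "z^((n + hh) mod TT) = z^n" using pow_mod_gen[OF zT] zh by (simp add: power_add)
    ultimately show "rho (1 - a^((n + hh) mod TT)) * z^((n + hh) mod TT) = rho (1 + a^n) * z^n" by simp
  qed
  finally show ?thesis .
qed

lemma K2: "Ksum (\<lambda>x. rho x * chi a z x) = (-1)^hh * (\<Sum>n<TT. rho (1 + a^n) * (-1)^n * z^n)"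
proof -
  have "Ksum (\<lambda>x. rho x * chi a z x) = (\<Sum>n<TT. rho (1 - a^n) * ((-1)^n * z^n))"
    using Ksum_pow[of "\<lambda>x. rho x * chi a z x"] L(5,6) by (simp add: chi_def rho_def)
  also have "\<dots> = (\<Sum>n<TT. rho (1 - a^((n + hh) mod TT)) * ((-1)^((n + hh) mod TT) * z^((n + hh) mod TT)))"
    by (rule sum_shift) (use L(1,2) in simp)
  also have "\<dots> = (\<Sum>n<TT. (-1)^hh * (rho (1 + a^n) * (-1)^n * z^n))"
  proof (rule sum.cong[OF refl])
    fix n
    have "a^((n + hh) mod TT) = -(a^n)" using L(3)[of "n+hh"] L(4) by (simp add: power_add)
    moreover have "z^((n + hh) mod TT) = z^n" using pow_mod_gen[OF zT] zh by (simp add: power_add)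
    moreover have "((-1::complex)^TT) = 1" using L(1) by (simp add: power_mult)
    then have "(-1::complex)^((n + hh) mod TT) = (-1)^n * (-1)^hh" using pow_mod_gen[of "-1::complex" TT] by (simp add: power_add)
    ultimately show "rho (1 - a^((n + hh) mod TT)) * ((-1)^((n + hh) mod TT) * z^((n + hh) mod TT))
      = (-1)^hh * (rho (1 + a^n) * (-1)^n * z^n)" by simp
  qed
  also have "\<dots> = (-1)^hh * (\<Sum>n<TT. rho (1 + a^n) * (-1)^n * z^n)" by (simp add: sum_distrib_left)
  finally show ?thesis .
qed

lemma geo0: "w^TT = 1 \<Longrightarrow> w \<noteq> 1 \<Longrightarrow> (\<Sum>n<TT. (w::complex)^n) = 0"
  by (simp add: sum_gp_strict)

lemma main_identity:
  "4 * (\<Sum>n<TT. if odd n \<and> slce a n then z^n else 0)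
   = - Ksum (chi a z) + (-1)^hh * Ksum (\<lambda>x. rho x * chi a z x) - (1 - (-1)^hh)"
proof -
  have hT: "hh < TT" using L(1,2) by simp
  have trm: "4 * (if odd n \<and> slce a n then z^n else 0)
     = z^n - (-z)^n - rho (1 + a^n) * z^n + rho (1 + a^n) * (-1)^n * z^n
       - (if n = hh then (1 - (-1)^n) * z^n else 0)" if n: "n < TT" for n
  proof -
    have e: "a^n + 1 = 0 \<longleftrightarrow> n = hh" using L(8)[OF n] .
    have mz: "(-z)^n = (-1)^n * z^n" by (rule power_minus)
    show ?thesis
    proof (cases "n = hh")
      case True
      then have "\<not> slce a n" "a^n + 1 = 0" using e unfolding slce_def by auto
      then show ?thesis using True mz by (simp add: rho_def add.commute algebra_simps)
    next
      case False
      then have ne: "1 + a^n \<noteq> 0" using e by (simp add: add.commute)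
      have r: "rho (1 + a^n) = (if slce a n then -1 else 1)"
        using ne unfolding rho_def slce_def by (simp add: add.commute)
      show ?thesis using False mz r by (cases "odd n") auto
    qed
  qed
  have "4 * (\<Sum>n<TT. if odd n \<and> slce a n then z^n else 0)
     = (\<Sum>n<TT. 4 * (if odd n \<and> slce a n then z^n else 0))" by (simp add: sum_distrib_left)
  also have "\<dots> = (\<Sum>n<TT. z^n - (-z)^n - rho (1 + a^n) * z^n + rho (1 + a^n) * (-1)^n * z^n
       - (if n = hh then (1 - (-1)^n) * z^n else 0))"
    by (rule sum.cong[OF refl]) (use trm in simp)
  also have "\<dots> = (\<Sum>n<TT. z^n) - (\<Sum>n<TT. (-z)^n) - (\<Sum>n<TT. rho (1 + a^n) * z^n)
      + (\<Sum>n<TT. rho (1 + a^n) * (-1)^n * z^n) - (\<Sum>n<TT. if n = hh then (1 - (-1)^n) * z^n else 0)"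
    by (simp only: sum.distrib sum_subtractf)
  also have "(\<Sum>n<TT. z^n) = 0" using geo0 zT z1 by simp
  also have "(\<Sum>n<TT. (-z)^n) = 0"
  proof (rule geo0)
    have "((-1::complex)^TT) = 1" using L(1) by (simp add: power_mult)
    then show "(-z)^TT = 1" using zT power_minus[of z TT] by (simp only: mult_1_left)
    show "-z \<noteq> 1" using zm1 minus_equation_iff by metis
  qed
  also have "(\<Sum>n<TT. if n = hh then (1 - (-1)^n) * z^n else 0) = 1 - (-1)^hh"
    using hT zh by simp
  also have "(\<Sum>n<TT. rho (1 + a^n) * z^n) = Ksum (chi a z)" using K1 by simp
  also have "(\<Sum>n<TT. rho (1 + a^n) * (-1)^n * z^n) = (-1)^hh * Ksum (\<lambda>x. rho x * chi a z x)"
  proof -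
    have sq: "(-1::complex)^hh * (-1)^hh = 1"
    proof -
      have "(-1::complex)^hh * (-1)^hh = ((-1)^2)^hh" by (simp only: power_mult_distrib[symmetric] power2_eq_square)
      then show ?thesis by simp
    qed
    show ?thesis using K2 sq by (simp only: mult.assoc[symmetric]) simp
  qed
  finally show ?thesis by simp
qed

end



lemma gen_field_mem: "x \<in> gen_field b \<longleftrightarrow> (\<forall>F. is_subfield F \<and> b \<in> F \<longrightarrow> x \<in> F)"
  unfolding gen_field_def by auto

lemma gen_field_props:
  fixes b :: "'b::field"
  shows "0 \<in> gen_field b" "1 \<in> gen_field b" "b \<in> gen_field b"
    "x \<in> gen_field b \<Longrightarrow> y \<in> gen_field b \<Longrightarrow> x + y \<in> gen_field b"
    "x \<in> gen_field b \<Longrightarrow> y \<in> gen_field b \<Longrightarrow> x * y \<in> gen_field b"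
  unfolding gen_field_mem is_subfield_def by auto

lemma coset_eqD:
  assumes "is_ideal_in R P" "coset x P = coset y P"
  shows "x - y \<in> P"
proof -
  have "0 \<in> P" using assms(1) unfolding is_ideal_in_def by auto
  then have "x \<in> coset y P" using assms(2) unfolding coset_def by (metis add_0_right image_eqI)
  then obtain i where "i \<in> P" "x = y + i" unfolding coset_def by auto
  then show ?thesis by simp
qed

lemma coset_zero_iff:
  assumes I: "is_ideal_in R P"
  shows "coset x P = coset 0 P \<longleftrightarrow> x \<in> P"
proof
  assume "coset x P = coset 0 P" then show "x \<in> P" using coset_eqD[OF I, of x 0] by simp
next
  assume x: "x \<in> P"
  have add: "\<And>u v. u \<in> P \<Longrightarrow> v \<in> P \<Longrightarrow> u + v \<in> P" and neg: "\<And>u. u \<in> P \<Longrightarrow> -u \<in> P"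
    using I unfolding is_ideal_in_def by auto
  have "coset x P = P"
  proof
    show "coset x P \<subseteq> P" unfolding coset_def using add x by auto
    show "P \<subseteq> coset x P"
    proof
      fix j assume j: "j \<in> P"
      then have "j + - x \<in> P" using add neg x by blast
      moreover have "j = x + (j + - x)" by simp
      ultimately show "j \<in> coset x P" unfolding coset_def by blast
    qed
  qed
  moreover have "coset 0 P = P" unfolding coset_def by simp
  ultimately show "coset x P = coset 0 P" by simp
qed




lemma of_nat_char2: "(2::'b::field) = 0 \<Longrightarrow> (of_nat n :: 'b) = (if odd n then 1 else 0)"
proof -
  assume two: "(2::'b) = 0"
  have "(of_nat n :: 'b) = of_nat (2 * (n div 2) + n mod 2)" by (simp only: mult_div_mod_eq)
  also have "\<dots> = 2 * of_nat (n div 2) + of_nat (n mod 2)" by (simp only: of_nat_add of_nat_mult of_nat_numeral)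
  also have "\<dots> = of_nat (n mod 2)" using two by simp
  finally show ?thesis by (cases "odd n") (auto simp: odd_iff_mod_2_eq_one even_iff_mod_2_eq_zero)
qed

theorem mainTheorem3:
  fixes \<alpha> :: "'a::{field,finite}"
    and \<beta> :: "'b::field"
    and p m k :: nat
    and P :: "complex set"
    and \<phi> :: "'b \<Rightarrow> complex set"
    and \<zeta> :: complex
  assumes "prime p" and "odd p" and "m \<ge> 1" and "card (UNIV :: 'a set) = p ^ m"
    and "primitive_elem \<alpha>"
    and "(2::'b) = 0"
    and "\<beta> ^ (card (UNIV :: 'a set) - 1) = 1"
    and "k > 1" and "\<beta> ^ k = 1" and "\<forall>j. 0 < j \<and> j < k \<longrightarrow> \<beta> ^ j \<noteq> 1"
    and "is_prime_ideal_in (Zzeta k) P" and "2 \<in> P"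
    and "is_field_iso \<phi> (gen_field \<beta>) (Zzeta k) P"
    and "\<zeta> ^ k = 1" and "\<phi> \<beta> = coset \<zeta> P"
  shows "hasse_S \<alpha> 1 \<beta> = 0 \<longleftrightarrow>
    (if card (UNIV :: 'a set) mod 4 = 1
     then cong_4P (Ksum (chi \<alpha> \<zeta>)) (Ksum (\<lambda>x. rho x * chi \<alpha> \<zeta> x)) P
     else cong_4P (2 + Ksum (chi \<alpha> \<zeta>) + Ksum (\<lambda>x. rho x * chi \<alpha> \<zeta> x)) 0 P)"
proof -
  note prim = assms(5) and two = assms(6) and bT = assms(7) and k1 = assms(8) and bk = assms(9)
    and bmin = assms(10) and iso = assms(13) and zk = assms(14) and phib = assms(15)
  define R where "R = Zzeta k"
  define F where "F = gen_field \<beta>"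
  define T where "T = card (UNIV :: 'a set) - 1"
  define h where "h = T div 2"
  have I: "is_ideal_in R P" using assms(11) unfolding R_def is_prime_ideal_in_def by auto
  have PR: "P \<subseteq> R" and P0: "0 \<in> P" and Padd: "\<And>u v. u \<in> P \<Longrightarrow> v \<in> P \<Longrightarrow> u + v \<in> P"
    and Pneg: "\<And>u. u \<in> P \<Longrightarrow> -u \<in> P"
    using I unfolding is_ideal_in_def by auto
  have oddq: "odd (card (UNIV :: 'a set))" using assms(2,4) by simp
  note TTe = TT_even[OF prim oddq T_def h_def]
  have b0: "\<beta> \<noteq> 0" using bk k1 by (metis power_0_left less_imp_neq not_gr0 zero_neq_one less_trans zero_less_one)
  have kodd: "odd k"
  proof
    assume "even k"
    then obtain j where j: "k = 2 * j" by auto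
    then have "0 < j" "j < k" using k1 by auto
    then have y1: "\<beta>^j \<noteq> 1" using bmin by auto
    have y2: "(\<beta>^j)^2 = 1" using bk j by (simp add: power_mult[symmetric] mult.commute)
    have "(\<beta>^j - 1) * (\<beta>^j + 1) = (\<beta>^j)^2 - 1" by (simp add: power2_eq_square algebra_simps)
    then have "(\<beta>^j - 1) * (\<beta>^j + 1) = 0" using y2 by simp
    then have "\<beta>^j = 1 \<or> \<beta>^j = -1" by (simp add: eq_neg_iff_add_eq_0)
    moreover have "(1::'b) = -1" using two by (simp only: eq_neg_iff_add_eq_0 one_add_one)
    ultimately show False using y1 by auto
  qed
  have kT: "k dvd T"
  proof -
    have "\<beta>^(T mod k) = 1" using pow_mod_gen[OF bk, of T] bT T_def by simp
    then have "T mod k = 0" using bmin k1 by (metis mod_less_divisor not_gr0 less_trans zero_less_one)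
    then show ?thesis by auto
  qed
  have kh: "k dvd h"
  proof -
    have "k dvd 2 * h" using kT TTe by simp
    moreover have "coprime k 2" using kodd by simp
    ultimately show ?thesis using coprime_dvd_mult_right_iff by blast
  qed
  have zT: "\<zeta>^T = 1" using kT zk by (auto elim!: dvdE simp: power_mult)
  have zh: "\<zeta>^h = 1" using kh zk by (auto elim!: dvdE simp: power_mult)
  have bij: "bij_betw \<phi> F (quotient_set R P)" and phi1: "\<phi> 1 = coset 1 P"
    and hom: "\<And>a b x y. a \<in> F \<Longrightarrow> b \<in> F \<Longrightarrow> x \<in> R \<Longrightarrow> y \<in> R \<Longrightarrow> \<phi> a = coset x P \<Longrightarrow> \<phi> b = coset y P
       \<Longrightarrow> \<phi> (a + b) = coset (x + y) P \<and> \<phi> (a * b) = coset (x * y) P"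
    using iso unfolding is_field_iso_def F_def R_def by auto
  have F0: "0 \<in> F" and F1: "1 \<in> F" and Fb: "\<beta> \<in> F"
    and Fadd: "\<And>x y. x \<in> F \<Longrightarrow> y \<in> F \<Longrightarrow> x + y \<in> F"
    and Fmul: "\<And>x y. x \<in> F \<Longrightarrow> y \<in> F \<Longrightarrow> x * y \<in> F"
    unfolding F_def using gen_field_props by auto
  have inF: "\<exists>r\<in>R. \<phi> x = coset r P" if x: "x \<in> F" for x
  proof -
    have "\<phi> x \<in> (\<lambda>x. coset x P) ` R" using bij x unfolding bij_betw_def quotient_set_def by blast
    then show ?thesis by blast
  qed
  have zR: "\<zeta> \<in> R"
  proof -
    obtain r where r: "r \<in> R" "\<phi> \<beta> = coset r P" using inF[OF Fb] by auto
    then have "\<zeta> - r \<in> P" using coset_eqD[OF I] phib by metis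
    then have zr: "\<zeta> - r \<in> Zzeta k" using PR unfolding R_def by blast
    have rR: "r \<in> Zzeta k" using r unfolding R_def by simp
    have "r + (\<zeta> - r) \<in> R" unfolding R_def by (rule Zzeta_add[OF rR zr])
    then show ?thesis by simp
  qed
  have phi0: "\<phi> 0 = coset 0 P"
  proof -
    obtain r where r: "r \<in> R" "\<phi> 0 = coset r P" using inF[OF F0] by auto
    then have "\<phi> (0 + 0) = coset (r + r) P" using hom[OF F0 F0 r(1) r(1)] by blast
    then have "coset r P = coset (r + r) P" using r by simp
    then have "r - (r + r) \<in> P" using coset_eqD[OF I] by blast
    then have "- (r - (r + r)) \<in> P" using Pneg by blast
    then have "r \<in> P" by simp
    then show ?thesis using r coset_zero_iff[OF I] by simp
  qed
  have z1: "\<zeta> \<noteq> 1"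
  proof
    assume "\<zeta> = 1"
    then have "\<phi> \<beta> = \<phi> 1" using phib phi1 by simp
    then have "\<beta> = 1" using bij Fb F1 unfolding bij_betw_def inj_on_def by blast
    then show False using bmin k1 by auto
  qed
  have zm1: "\<zeta> \<noteq> -1"
  proof
    assume "\<zeta> = -1"
    then have "(-1::complex)^k = 1" using zk by simp
    then show False using kodd by simp
  qed
  have powphi: "\<beta>^n \<in> F \<and> \<zeta>^n \<in> R \<and> \<phi> (\<beta>^n) = coset (\<zeta>^n) P" for n
  proof (induction n)
    case 0 then show ?case using F1 phi1 unfolding R_def by (simp add: Zzeta_1)
  next
    case (Suc n)
    then have "\<phi> (\<beta> * \<beta>^n) = coset (\<zeta> * \<zeta>^n) P" using hom[OF Fb _ zR _ phib] by blast
    then show ?case using Suc Fmul[OF Fb] zR unfolding R_def by (auto intro: Zzeta_mult)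
  qed
  have sumphi: "finite S \<Longrightarrow> (\<Sum>n\<in>S. if c n then \<beta>^n else 0) \<in> F \<and> (\<Sum>n\<in>S. if c n then \<zeta>^n else 0) \<in> R
     \<and> \<phi> (\<Sum>n\<in>S. if c n then \<beta>^n else 0) = coset (\<Sum>n\<in>S. if c n then \<zeta>^n else 0) P" for S c
  proof (induction S rule: finite_induct)
    case empty then show ?case using F0 phi0 unfolding R_def by (simp add: Zzeta_0)
  next
    case (insert n S)
    let ?b = "if c n then \<beta>^n else 0" and ?z = "if c n then \<zeta>^n else 0"
    have t: "?b \<in> F \<and> ?z \<in> R \<and> \<phi> ?b = coset ?z P" using powphi[of n] F0 phi0 unfolding R_def by (simp add: Zzeta_0)
    have "\<phi> (?b + (\<Sum>n\<in>S. if c n then \<beta>^n else 0)) = coset (?z + (\<Sum>n\<in>S. if c n then \<zeta>^n else 0)) P"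
      using hom t insert.IH by blast
    then show ?case using insert t Fadd unfolding R_def by (simp add: Zzeta_add)
  qed
  define B where "B = (\<Sum>n<T. if odd n \<and> slce \<alpha> n then \<beta>^n else 0)"
  define A where "A = (\<Sum>n<T. if odd n \<and> slce \<alpha> n then \<zeta>^n else 0)"
  have BA: "B \<in> F" "\<phi> B = coset A P" using sumphi[of "{..<T}" "\<lambda>n. odd n \<and> slce \<alpha> n"]
    unfolding A_def B_def by auto
  have hasseB: "\<beta> * hasse_S \<alpha> 1 \<beta> = B"
  proof -
    have "\<beta> * hasse_S \<alpha> 1 \<beta> = (\<Sum>n\<in>{1..<T}. \<beta> * (of_nat (n choose 1) * (if slce \<alpha> n then 1 else 0) * \<beta> ^ (n - 1)))"
      unfolding hasse_S_def T_def by (simp add: sum_distrib_left)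
    also have "\<dots> = (\<Sum>n\<in>{1..<T}. if odd n \<and> slce \<alpha> n then \<beta>^n else 0)"
    proof (rule sum.cong[OF refl])
      fix n assume "n \<in> {1..<T}"
      then have "\<beta> * \<beta>^(n-1) = \<beta>^n" by (cases n) auto
      then show "\<beta> * (of_nat (n choose 1) * (if slce \<alpha> n then 1 else 0) * \<beta> ^ (n - 1))
          = (if odd n \<and> slce \<alpha> n then \<beta>^n else 0)"
        using of_nat_char2[OF two, of n] by (auto simp: algebra_simps)
    qed
    also have "\<dots> = B" unfolding B_def
      by (rule sum.mono_neutral_left) (auto simp: Suc_le_eq)
    finally show ?thesis .
  qed
  have "hasse_S \<alpha> 1 \<beta> = 0 \<longleftrightarrow> B = 0" using hasseB b0 by auto
  also have "\<dots> \<longleftrightarrow> \<phi> B = coset 0 P"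
  proof
    assume "\<phi> B = coset 0 P"
    then have "\<phi> B = \<phi> 0" using phi0 by simp
    then show "B = 0" using bij BA(1) F0 unfolding bij_betw_def inj_on_def by blast
  qed (use phi0 in simp)
  also have "\<dots> \<longleftrightarrow> A \<in> P" using BA(2) coset_zero_iff[OF I] by simp
  also have "\<dots> \<longleftrightarrow> - (4 * A) \<in> (\<lambda>p. 4 * p) ` P"
  proof
    assume "A \<in> P"
    then have "- A \<in> P" using Pneg by blast
    then show "- (4 * A) \<in> (\<lambda>p. 4 * p) ` P" by (intro image_eqI[of _ _ "-A"]) auto
  next
    assume "- (4 * A) \<in> (\<lambda>p. 4 * p) ` P"
    then obtain u where "u \<in> P" "- (4 * A) = 4 * u" by auto
    then have "A = - u" "-u \<in> P" using Pneg by auto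
    then show "A \<in> P" by simp
  qed
  also have "4 * A = - Ksum (chi \<alpha> \<zeta>) + (-1)^h * Ksum (\<lambda>x. rho x * chi \<alpha> \<zeta> x) - (1 - (-1)^h)"
    unfolding A_def by (rule main_identity[OF prim oddq T_def h_def zT zh z1 zm1])
  finally have main: "hasse_S \<alpha> 1 \<beta> = 0 \<longleftrightarrow>
     - (- Ksum (chi \<alpha> \<zeta>) + (-1)^h * Ksum (\<lambda>x. rho x * chi \<alpha> \<zeta> x) - (1 - (-1)^h)) \<in> (\<lambda>p. 4 * p) ` P" .
  have q: "card (UNIV :: 'a set) = 2 * h + 1" using TTe oddq T_def by (simp add: odd_pos)
  show ?thesis
  proof (cases "card (UNIV :: 'a set) mod 4 = 1")
    case True
    then have "even h" using q by presburger
    then show ?thesis using main True unfolding cong_4P_def by simp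
  next
    case False
    then have "odd h" using q by presburger
    then show ?thesis using main False unfolding cong_4P_def by (simp add: algebra_simps)
  qed
qed



end
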